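(* Fix $t>1$ and define the sequence $(g_{n,t})_{n\ge0}$ by $g_{0,t}=1$ and $g_{n,t}=n\,g_{n-1,t}^{\,t}$ for $n\ge1$. Then for all $n\ge0$, $$g_{n,t}=\sigma_t^{\,t^n}\exp\!\left[\frac1t\frac{\partial\Phi}{\partial s}\!\left(\frac1t,0,n+1\right)\right]=\sigma_t^{\,t^n}\prod_{m=1}^{\infty}(m+n)^{-1/t^m},$$ where $\sigma_t=\prod_{n=1}^{\infty}n^{1/t^n}$.
   Context: $\Phi(z,s,u)$ is the Lerch transcendent: for $|z|<1$, $u>0$ and all $s\in\mathbb{C}$, $\Phi(z,s,u)=\sum_{n=0}^{\infty}\frac{z^n}{(n+u)^s}$; $\frac{\partial\Phi}{\partial s}$ is its partial derivative in $s$. *)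

theory Defs
  imports "HOL-Analysis.Analysis"
begin

definition lerch_phi :: "real \<Rightarrow> complex \<Rightarrow> real \<Rightarrow> complex" where
  "lerch_phi z s u = (\<Sum>n. complex_of_real (z ^ n) / (complex_of_real (real n + u)) powr s)"

fun gseq :: "nat \<Rightarrow> real \<Rightarrow> real" where
  "gseq 0 t = 1"
| "gseq (Suc n) t = real (Suc n) * (gseq n t) powr t"

definition sigma_t :: "real \<Rightarrow> real" where
  "sigma_t t = (\<Prod>k. real (k + 1) powr (1 / t ^ (k + 1)))"

end

theory Submission
  imports Defs
begin

definition aL :: "real \<Rightarrow> nat \<Rightarrow> nat \<Rightarrow> real" where
  "aL t n k = ln (real (k + 1 + n)) / t ^ (k + 1)"

definition LL :: "real \<Rightarrow> nat \<Rightarrow> real" where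
  "LL t n = suminf (aL t n)"

lemma aL_summable:
  assumes "t > 1"
  shows "summable (aL t n)"
proof (rule summable_comparison_test)
  have "summable (\<lambda>k. of_nat (Suc k) * (1/t) ^ k :: real)"
    using geometric_deriv_sums[of "1/t"] assms by (auto simp: sums_iff)
  then show "summable (\<lambda>k. (real n + 1) / t * (of_nat (Suc k) * (1/t) ^ k))"
    by (rule summable_mult)
  show "\<exists>N. \<forall>k\<ge>N. norm (aL t n k) \<le> (real n + 1) / t * (of_nat (Suc k) * (1/t) ^ k)"
  proof (intro exI allI impI)
    fix k :: nat
    have tk: "t ^ (k+1) > 0" using assms by simp
    have l0: "ln (real (k + 1 + n)) \<ge> 0" by simp
    have "ln (real (k + 1 + n)) \<le> real (k + 1 + n)"
      using ln_le_minus_one[of "real (k+1+n)"] by simp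
    also have "\<dots> \<le> (real n + 1) * real (Suc k)" by (simp add: algebra_simps)
    finally have le: "ln (real (k + 1 + n)) \<le> (real n + 1) * real (Suc k)" .
    have "norm (aL t n k) = ln (real (k + 1 + n)) / t ^ (k + 1)"
      using l0 tk by (simp add: aL_def)
    also have "\<dots> \<le> (real n + 1) * real (Suc k) / t ^ (k + 1)"
      using le tk by (simp add: divide_right_mono)
    also have "\<dots> = (real n + 1) / t * (of_nat (Suc k) * (1/t) ^ k)"
      by (simp add: power_divide field_simps)
    finally show "norm (aL t n k) \<le> (real n + 1) / t * (of_nat (Suc k) * (1/t) ^ k)" .
  qed
qed

lemma LL_shift:
  assumes "t > 1"
  shows "t * LL t n = ln (real n + 1) + LL t (Suc n)"
proof -
  define b where "b k = t * aL t n k" for k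
  have sb: "summable b" unfolding b_def using aL_summable[OF assms] by (rule summable_mult)
  have "t * LL t n = suminf b" unfolding LL_def b_def
    using aL_summable[OF assms] by (simp add: suminf_mult)
  also have "\<dots> = b 0 + (\<Sum>k. b (Suc k))" using suminf_split_head[OF sb] by simp
  also have "b 0 = ln (real n + 1)" using assms by (simp add: b_def aL_def add.commute)
  also have "(\<lambda>k. b (Suc k)) = aL t (Suc n)"
    using assms by (auto simp: b_def aL_def fun_eq_iff field_simps)
  finally show ?thesis by (simp add: LL_def)
qed

lemma gseq_LL:
  assumes "t > 1"
  shows "gseq n t = exp (t ^ n * LL t 0 - LL t n)"
proof (induction n)
  case 0
  then show ?case by simp
next
  case (Suc n)
  have "gseq (Suc n) t = real (Suc n) * exp (t * (t ^ n * LL t 0 - LL t n))"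
    using Suc by (simp add: powr_def)
  also have "\<dots> = exp (ln (real n + 1)) * exp (t ^ Suc n * LL t 0 - t * LL t n)"
    by (simp add: algebra_simps)
  also have "\<dots> = exp (ln (real n + 1) + (t ^ Suc n * LL t 0 - t * LL t n))"
    by (simp only: exp_add)
  also have "\<dots> = exp (t ^ Suc n * LL t 0 - LL t (Suc n))"
    by (rule arg_cong[where f=exp]) (use LL_shift[OF assms, of n] in linarith)
  finally show ?case .
qed

lemma prod_conv:
  assumes "t > 1"
  shows "convergent_prod (\<lambda>k. real (k + 1 + n) powr (- 1 / t ^ (k + 1)))"
    "(\<Prod>k. real (k + 1 + n) powr (- 1 / t ^ (k + 1))) = exp (- LL t n)"
proof -
  have eq: "(\<lambda>k. real (k + 1 + n) powr (- 1 / t ^ (k + 1))) = (\<lambda>k. exp (- aL t n k))"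
    by (auto simp: fun_eq_iff powr_def aL_def)
  have s: "summable (\<lambda>k. - aL t n k)" using aL_summable[OF assms] by (rule summable_minus)
  show "convergent_prod (\<lambda>k. real (k + 1 + n) powr (- 1 / t ^ (k + 1)))"
    unfolding eq by (rule convergent_prod_exp[OF s])
  show "(\<Prod>k. real (k + 1 + n) powr (- 1 / t ^ (k + 1))) = exp (- LL t n)"
    unfolding eq prodinf_exp[OF s] LL_def using aL_summable[OF assms] by (simp add: suminf_minus)
qed

lemma sigma_eq:
  assumes "t > 1"
  shows "convergent_prod (\<lambda>k. real (k + 1) powr (1 / t ^ (k + 1)))"
    "sigma_t t = exp (LL t 0)"
proof -
  have eq: "(\<lambda>k. real (k + 1) powr (1 / t ^ (k + 1))) = (\<lambda>k. exp (aL t 0 k))"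
    by (auto simp: fun_eq_iff powr_def aL_def)
  have s: "summable (aL t 0)" using aL_summable[OF assms] .
  show "convergent_prod (\<lambda>k. real (k + 1) powr (1 / t ^ (k + 1)))"
    unfolding eq by (rule convergent_prod_exp[OF s])
  show "sigma_t t = exp (LL t 0)"
    unfolding sigma_t_def eq prodinf_exp[OF s] LL_def ..
qed


lemma cpowr: "x > 0 \<Longrightarrow> (complex_of_real x) powr s = exp (s * of_real (ln x))"
  by (simp add: powr_def Ln_of_real)

lemma lerch_deriv:
  assumes "t > 1"
  shows "((\<lambda>s. lerch_phi (1 / t) s (real n + 1)) has_field_derivative
           - of_real (t * LL t n)) (at 0)"
proof -
  define z where "z = 1 / t"
  define c where "c k = ln (real k + (real n + 1))" for k
  have z0: "z > 0" "z < 1" using assms by (auto simp: z_def)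
  have c0: "c k \<ge> 0" for k by (simp add: c_def)
  define f where "f k s = complex_of_real (z ^ k) * exp (- (s * of_real (c k)))" for k s
  define f' where "f' k s = complex_of_real (z ^ k) * (- of_real (c k)) * exp (- (s * of_real (c k)))" for k s
  have lerch: "(\<lambda>s. lerch_phi (1 / t) s (real n + 1)) = (\<lambda>s. \<Sum>k. f k s)"
  proof (rule ext)
    fix s
    have "\<And>k. complex_of_real ((1/t) ^ k) / complex_of_real (real k + (real n + 1)) powr s = f k s"
      by (subst cpowr) (auto simp: f_def c_def z_def exp_minus divide_inverse)
    then show "lerch_phi (1 / t) s (real n + 1) = (\<Sum>k. f k s)"
      unfolding lerch_phi_def by simp
  qed
  define M where "M k = 2 * (real n + 1) * (of_nat (Suc k) * z ^ k)" for k
  have sM: "summable M"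
  proof -
    have "summable (\<lambda>k. of_nat (Suc k) * z ^ k :: real)"
      using geometric_deriv_sums[of z] z0 by (auto simp: sums_iff)
    then show ?thesis unfolding M_def by (rule summable_mult)
  qed
  have bound: "norm (f' k s) \<le> M k" if "s \<in> ball 0 (1/2)" for k s
  proof -
    have ns: "norm s < 1/2" using that by simp
    have re: "- Re s * c k \<le> c k / 2"
    proof -
      have "- Re s \<le> 1/2" using abs_Re_le_cmod[of s] ns by linarith
      then show ?thesis using c0[of k] mult_right_mono[of "- Re s" "1/2" "c k"] by simp
    qed
    have "norm (f' k s) = z ^ k * c k * exp (- Re s * c k)"
      using z0 c0[of k] by (simp add: f'_def norm_mult norm_exp_eq_Re norm_power)
    also have "\<dots> \<le> z ^ k * c k * exp (c k / 2)"
      using re z0 c0[of k] by (intro mult_left_mono) (auto)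
    also have "\<dots> \<le> z ^ k * (2 * exp (c k / 2)) * exp (c k / 2)"
    proof -
      have "c k / 2 \<le> exp (c k / 2)" using exp_ge_add_one_self[of "c k / 2"] by linarith
      then show ?thesis using z0 by (intro mult_right_mono mult_left_mono) auto
    qed
    also have "\<dots> = 2 * z ^ k * exp (c k)"
    proof -
      have "exp (c k / 2) * exp (c k / 2) = exp (c k)" by (simp add: exp_add[symmetric])
      then show ?thesis by (simp add: mult.assoc)
    qed
    also have "exp (c k) = real k + (real n + 1)" by (simp add: c_def)
    also have "2 * z ^ k * (real k + (real n + 1)) \<le> M k"
    proof -
      have "real k + (real n + 1) \<le> (real n + 1) * real (Suc k)" by (simp add: algebra_simps)
      then have "2 * z ^ k * (real k + (real n + 1)) \<le> 2 * z ^ k * ((real n + 1) * real (Suc k))"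
        using z0 by (intro mult_left_mono) auto
      then show ?thesis unfolding M_def by (simp add: algebra_simps)
    qed
    finally show ?thesis .
  qed
  have der: "\<And>k s. s \<in> ball 0 (1/2) \<Longrightarrow> (f k has_field_derivative f' k s) (at s within ball 0 (1/2))"
    unfolding f_def f'_def by (auto intro!: derivative_eq_intros)
  have uc: "uniformly_convergent_on (ball 0 (1/2)) (\<lambda>n x. \<Sum>i<n. f' i x)"
    by (rule Weierstrass_m_test'[OF bound sM])
  have s0: "summable (\<lambda>k. f k 0)"
  proof -
    have "summable (\<lambda>k. complex_of_real z ^ k)" using z0 by simp
    then show ?thesis by (simp add: f_def)
  qed
  from has_field_derivative_series'(2)[OF convex_ball der uc _ s0, of 0]
  have D: "((\<lambda>x. \<Sum>k. f k x) has_field_derivative (\<Sum>k. f' k 0)) (at 0)" by simp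
  have rs: "(\<lambda>k. z ^ k * c k) = (\<lambda>k. t * aL t n k)"
    using assms by (auto simp: fun_eq_iff z_def c_def aL_def field_simps)
  have sr: "summable (\<lambda>k. z ^ k * c k)" unfolding rs
    using aL_summable[OF assms] by (rule summable_mult)
  have "(\<Sum>k. f' k 0) = (\<Sum>k. - complex_of_real (z ^ k * c k))"
    by (simp add: f'_def)
  also have "\<dots> = - complex_of_real (\<Sum>k. z ^ k * c k)"
  proof -
    have sc: "summable (\<lambda>k. complex_of_real (z ^ k * c k))"
      using sr by (rule summable_of_real)
    have "(\<Sum>k. - complex_of_real (z ^ k * c k)) = - (\<Sum>k. complex_of_real (z ^ k * c k))"
      using sc by (rule suminf_minus)
    also have "(\<Sum>k. complex_of_real (z ^ k * c k)) = complex_of_real (\<Sum>k. z ^ k * c k)"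
      using suminf_of_real[OF sr, where 'a=complex] by simp
    finally show ?thesis .
  qed
  also have "(\<Sum>k. z ^ k * c k) = t * LL t n"
    unfolding rs LL_def using aL_summable[OF assms] by (simp add: suminf_mult)
  finally show ?thesis using D lerch by simp
qed

theorem theorem20:
  fixes t :: real and n :: nat
  assumes "t > 1"
  shows "convergent_prod (\<lambda>k. real (k + 1) powr (1 / t ^ (k + 1)))
    \<and> convergent_prod (\<lambda>k. real (k + 1 + n) powr (- 1 / t ^ (k + 1)))
    \<and> (\<exists>D. ((\<lambda>s. lerch_phi (1 / t) s (real n + 1)) has_field_derivative D) (at 0)
         \<and> complex_of_real (gseq n t)
             = complex_of_real (sigma_t t powr (t ^ n)) * exp (D / complex_of_real t))
    \<and> gseq n t = sigma_t t powr (t ^ n) * (\<Prod>k. real (k + 1 + n) powr (- 1 / t ^ (k + 1)))"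
proof -
  have sp: "sigma_t t powr (t ^ n) = exp (t ^ n * LL t 0)"
    by (simp add: sigma_eq(2)[OF assms] powr_def exp_of_nat_mult mult.commute)
  have g: "gseq n t = sigma_t t powr (t ^ n) * exp (- LL t n)"
    unfolding sp gseq_LL[OF assms] by (simp add: exp_diff exp_minus divide_inverse)
  have ex: "exp (- complex_of_real (t * LL t n) / complex_of_real t) = complex_of_real (exp (- LL t n))"
    using assms by (simp add: exp_of_real[symmetric])
  show ?thesis
    using sigma_eq(1)[OF assms] prod_conv[OF assms, of n] lerch_deriv[OF assms, of n] g ex
    by auto
qed

end
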